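(* Let $\alpha,\beta\in\mathbb{R}^n_{>}$. Then $\alpha$-GSP is Vickrey-preserving on $\Theta^\beta$ if and only if, for every $\theta\in\Theta^\beta$ (with the agents indexed so that $v_1(\theta_1)\ge v_2(\theta_2)\ge\dots\ge v_n(\theta_n)$ and with $v_{n+1}(\theta_{n+1}):=0$), the sequence $\{p_j(\theta)/\alpha_j\}_{j=1,\dots,k}$ is decreasing, where $$p_j(\theta)=\sum_{i=j}^{k} v_{i+1}(\theta_{i+1})\cdot(\beta_i-\beta_{i+1}).$$
   Context: Sponsored search setting: a set $N=\{1,\dots,n\}$ of agents and $k\le n$ slots $1,\dots,k$. An outcome assigns the agents to distinct positions in $\{1,\dots,n\}$; an agent in position $j\le k$ receives slot $j$, an agent in a position $>k$ receives nothing (value $0$). Utilities are quasilinear (value minus payment). $\mathbb{R}^n_{>}$ denotes the set of vectors $\alpha$ with $1=\alpha_1>\alpha_2>\dots>\alpha_k>0$ and $\alpha_j=0$ for $j>k$ (also set $\alpha_{n+1}=0$). For $\beta\in\mathbb{R}^n_{>}$, $\Theta^\beta$ is the set of type profiles $\theta$ such that each agent $i$ has a per-click value $v_i(\theta_i)\ge 0$ and values slot $j$ at $\beta_j\cdot v_i(\theta_i)$. The (fully expressive) VCG mechanism: each agent reports a bid $x_{i,j}$ for each slot $j$; it chooses an assignment maximizing the sum of the bids of agents on their assigned slots and charges each agent $i$ the Clarke payment (maximum total bid of the others over all assignments minus the others' total bid in the chosen assignment). The VCG outcome for $\theta$ is the assignment and payments of VCG when every agent bids its true value for every slot. $\alpha$-GSP: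 each agent $i$ submits a single number $b_i\ge 0$ (equivalently, the bid vector $(\alpha_1 b_i,\dots,\alpha_k b_i)$ in the GSP mechanism); agents are ranked by $b_i$ (ties broken arbitrarily); the agent of rank $j\le k$ receives slot $j$ and pays $\alpha_j$ times the $(j+1)$-st highest value of $b$ (zero if there is none). This is the GSP mechanism (slots sold in order $1,\dots,k$, each to the highest remaining bidder on that slot at the second-highest remaining bid on that slot) restricted to such bid vectors. Complete information: for a given type profile, a message profile is a Nash equilibrium if no agent can strictly increase its utility by unilaterally changing its message within its allowed message set. A mechanism is Vickrey-preserving on a set $T$ of type profiles if for every $\theta\in T$ it has a Nash equilibrium (for $\theta$) yielding the VCG outcome for $\theta$ (same assignment and payments). *)

theory Defs
  imports Complex_Main "HOL-Combinatorics.Permutations"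
begin

(* Agents are 1..n, positions are 1..n, slots are 1..k.
   Vectors alpha, beta : nat => real are indexed from 1. *)

definition in_Rn_gt :: "nat \<Rightarrow> nat \<Rightarrow> (nat \<Rightarrow> real) \<Rightarrow> bool" where
  "in_Rn_gt n k a \<longleftrightarrow> 1 \<le> k \<and> k \<le> n \<and> a 1 = 1 \<and>
     (\<forall>j. 1 \<le> j \<and> j < k \<longrightarrow> a (j+1) < a j) \<and> a k > 0 \<and>
     (\<forall>j. k < j \<and> j \<le> n + 1 \<longrightarrow> a j = 0)"

(* type profile in Theta^beta: per-click values v i >= 0 of agents 1..n *)
definition type_profile :: "nat \<Rightarrow> (nat \<Rightarrow> real) \<Rightarrow> bool" where
  "type_profile n v \<longleftrightarrow> (\<forall>i\<in>{1..n}. 0 \<le> v i)"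

(* an outcome assigns agents to distinct positions: pi i = position of agent i *)
definition assignments :: "nat \<Rightarrow> (nat \<Rightarrow> nat) set" where
  "assignments n = {\<pi>. \<pi> permutes {1..n}}"

(* total (true) value of all agents except i under assignment pi;
   agent l values position j at beta j * v l (beta j = 0 for j > k) *)
definition others_welfare :: "nat \<Rightarrow> (nat \<Rightarrow> real) \<Rightarrow> (nat \<Rightarrow> real) \<Rightarrow> (nat \<Rightarrow> nat) \<Rightarrow> nat \<Rightarrow> real" where
  "others_welfare n \<beta> v \<pi> i = (\<Sum>l\<in>{1..n} - {i}. \<beta> (\<pi> l) * v l)"

definition welfare :: "nat \<Rightarrow> (nat \<Rightarrow> real) \<Rightarrow> (nat \<Rightarrow> real) \<Rightarrow> (nat \<Rightarrow> nat) \<Rightarrow> real" where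
  "welfare n \<beta> v \<pi> = (\<Sum>l\<in>{1..n}. \<beta> (\<pi> l) * v l)"

definition clarke_payment :: "nat \<Rightarrow> (nat \<Rightarrow> real) \<Rightarrow> (nat \<Rightarrow> real) \<Rightarrow> (nat \<Rightarrow> nat) \<Rightarrow> nat \<Rightarrow> real" where
  "clarke_payment n \<beta> v \<pi> i =
     Max ((\<lambda>\<pi>'. others_welfare n \<beta> v \<pi>' i) ` assignments n) - others_welfare n \<beta> v \<pi> i"

definition vcg_outcome :: "nat \<Rightarrow> (nat \<Rightarrow> real) \<Rightarrow> (nat \<Rightarrow> real) \<Rightarrow> (nat \<Rightarrow> nat) \<Rightarrow> (nat \<Rightarrow> real) \<Rightarrow> bool" where
  "vcg_outcome n \<beta> v \<pi> pay \<longleftrightarrow> \<pi> \<in> assignments n \<and>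
     (\<forall>\<pi>'\<in>assignments n. welfare n \<beta> v \<pi>' \<le> welfare n \<beta> v \<pi>) \<and>
     (\<forall>i\<in>{1..n}. pay i = clarke_payment n \<beta> v \<pi> i)"

(* m-th highest value of b among agents 1..n (0 if m > n) *)
definition nth_highest :: "nat \<Rightarrow> (nat \<Rightarrow> real) \<Rightarrow> nat \<Rightarrow> real" where
  "nth_highest n b m = (if 1 \<le> m \<and> m \<le> n then rev (sort (map b [1..<Suc n])) ! (m - 1) else 0)"

definition gsp_ranking :: "nat \<Rightarrow> (nat \<Rightarrow> real) \<Rightarrow> (nat \<Rightarrow> nat) \<Rightarrow> bool" where
  "gsp_ranking n b \<pi> \<longleftrightarrow> \<pi> \<in> assignments n \<and>
     (\<forall>i\<in>{1..n}. \<forall>l\<in>{1..n}. \<pi> i < \<pi> l \<longrightarrow> b l \<le> b i)"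

definition gsp_payment :: "nat \<Rightarrow> nat \<Rightarrow> (nat \<Rightarrow> real) \<Rightarrow> (nat \<Rightarrow> real) \<Rightarrow> (nat \<Rightarrow> nat) \<Rightarrow> nat \<Rightarrow> real" where
  "gsp_payment n k \<alpha> b \<pi> i = (if \<pi> i \<le> k then \<alpha> (\<pi> i) * nth_highest n b (\<pi> i + 1) else 0)"

definition gsp_utility :: "nat \<Rightarrow> nat \<Rightarrow> (nat \<Rightarrow> real) \<Rightarrow> (nat \<Rightarrow> real) \<Rightarrow> (nat \<Rightarrow> real) \<Rightarrow> (nat \<Rightarrow> real) \<Rightarrow> (nat \<Rightarrow> nat) \<Rightarrow> nat \<Rightarrow> real" where
  "gsp_utility n k \<alpha> \<beta> v b \<pi> i = \<beta> (\<pi> i) * v i - gsp_payment n k \<alpha> b \<pi> i"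

(* (b, pi) is a Nash equilibrium of alpha-GSP for values v: the outcome pi is a
   valid ranking for b, and no agent can strictly gain by any unilateral
   deviation to a bid c >= 0, whatever ranking of the new profile is chosen *)
definition gsp_nash :: "nat \<Rightarrow> nat \<Rightarrow> (nat \<Rightarrow> real) \<Rightarrow> (nat \<Rightarrow> real) \<Rightarrow> (nat \<Rightarrow> real) \<Rightarrow> (nat \<Rightarrow> real) \<Rightarrow> (nat \<Rightarrow> nat) \<Rightarrow> bool" where
  "gsp_nash n k \<alpha> \<beta> v b \<pi> \<longleftrightarrow> (\<forall>i\<in>{1..n}. 0 \<le> b i) \<and> gsp_ranking n b \<pi> \<and>
     (\<forall>i\<in>{1..n}. \<forall>c. \<forall>\<pi>'. 0 \<le> c \<longrightarrow> gsp_ranking n (b(i := c)) \<pi>' \<longrightarrow>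
        gsp_utility n k \<alpha> \<beta> v (b(i := c)) \<pi>' i \<le> gsp_utility n k \<alpha> \<beta> v b \<pi> i)"

definition vickrey_preserving_gsp :: "nat \<Rightarrow> nat \<Rightarrow> (nat \<Rightarrow> real) \<Rightarrow> (nat \<Rightarrow> real) \<Rightarrow> bool" where
  "vickrey_preserving_gsp n k \<alpha> \<beta> \<longleftrightarrow> (\<forall>v. type_profile n v \<longrightarrow>
     (\<exists>b \<pi> pay. vcg_outcome n \<beta> v \<pi> pay \<and> gsp_nash n k \<alpha> \<beta> v b \<pi> \<and>
        (\<forall>i\<in>{1..n}. gsp_payment n k \<alpha> b \<pi> i = pay i)))"

(* p_j(theta) = sum_{i=j}^k w_{i+1} (beta_i - beta_{i+1}), where w is the sorted
   value vector (w_i = v_{s i} for i <= n, w_{n+1} = 0) *)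
definition p_seq :: "nat \<Rightarrow> nat \<Rightarrow> (nat \<Rightarrow> real) \<Rightarrow> (nat \<Rightarrow> real) \<Rightarrow> nat \<Rightarrow> real" where
  "p_seq n k \<beta> w j = (\<Sum>i=j..k. (if i + 1 \<le> n then w (i + 1) else 0) * (\<beta> i - \<beta> (i + 1)))"

end

theory Submission
  imports Defs
begin



lemma dec_mono:
  fixes w :: "nat \<Rightarrow> real"
  assumes dec: "\<forall>j. 1 \<le> j \<and> j < n \<longrightarrow> w (j + 1) \<le> w j"
  shows "1 \<le> a \<Longrightarrow> a \<le> b \<Longrightarrow> b \<le> n \<Longrightarrow> w b \<le> w a"
proof (induction b)
  case 0 then show ?case by simp
next
  case (Suc m)
  show ?case
  proof (cases "a = Suc m")
    case True then show ?thesis by simp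
  next
    case False
    then have "a \<le> m" using Suc by simp
    then have "w m \<le> w a" using Suc by simp
    moreover have "w (m+1) \<le> w m" using dec Suc \<open>a \<le> m\<close> by simp
    ultimately show ?thesis by simp
  qed
qed

lemma subset_le:
  fixes w :: "nat \<Rightarrow> real"
  assumes dec: "\<forall>j. 1 \<le> j \<and> j < n \<longrightarrow> w (j + 1) \<le> w j"
    and nn: "\<forall>r\<in>{1..n}. 0 \<le> w r"
    and B: "B \<subseteq> {1..n}" "card B \<le> t" "t \<le> n"
  shows "sum w B \<le> sum w {1..t}"
proof (cases "t = 0")
  case True
  then have "B = {}" using B finite_subset by fastforce
  then show ?thesis using \<open>t = 0\<close> by simp
next
  case False
  let ?C = "{1..t}"
  have fB: "finite B" using B finite_subset by blast
  have c1: "card (B - ?C) \<le> card (?C - B)"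
  proof -
    have "card (B - ?C) = card B - card (B \<inter> ?C)"
      by (metis card_Diff_subset_Int fB finite_Int inf_commute)
    moreover have "card (?C - B) = card ?C - card (?C \<inter> B)"
      by (simp add: card_Diff_subset_Int)
    moreover have "card (B \<inter> ?C) = card (?C \<inter> B)" by (simp add: inf_commute)
    ultimately show ?thesis using B by simp
  qed
  have "sum w (B - ?C) \<le> of_nat (card (B - ?C)) * w t"
  proof -
    have "sum w (B - ?C) \<le> sum (\<lambda>_. w t) (B - ?C)"
      apply (rule sum_mono)
      using B False by (intro dec_mono[OF dec]) auto
    then show ?thesis by simp
  qed
  also have "\<dots> \<le> of_nat (card (?C - B)) * w t"
    using c1 nn False B by (intro mult_right_mono) auto
  also have "\<dots> \<le> sum w (?C - B)"
  proof -
    have "sum (\<lambda>_. w t) (?C - B) \<le> sum w (?C - B)"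
      apply (rule sum_mono)
      using B False by (intro dec_mono[OF dec]) auto
    then show ?thesis by simp
  qed
  finally have "sum w (B - ?C) \<le> sum w (?C - B)" .
  moreover have "sum w B = sum w (B - ?C) + sum w (B \<inter> ?C)"
    by (metis add.commute fB sum.Int_Diff)
  moreover have "sum w ?C = sum w (?C - B) + sum w (B \<inter> ?C)"
    by (metis add.commute finite_atLeastAtMost inf_commute sum.Int_Diff)
  ultimately show ?thesis by linarith
qed



lemma sort_perm_exists:
  fixes v :: "nat \<Rightarrow> real"
  shows "\<exists>s. s permutes {1..n} \<and> (\<forall>j. 1 \<le> j \<and> j < n \<longrightarrow> v (s (j + 1)) \<le> v (s j))"
proof -
  define xs where "xs = sort_key (\<lambda>l. - v l) [1..<Suc n]"
  have mx: "mset xs = mset [1..<Suc n]" unfolding xs_def by simp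
  have dx: "distinct xs" using mx by (metis distinct_upt mset_eq_imp_distinct_iff)
  have sx: "set xs = {1..n}" using mx by (metis atLeastLessThanSuc_atLeastAtMost set_mset_mset set_upt)
  have lx: "length xs = n" using mx by (metis diff_Suc_1 length_upt mset_eq_length)
  have so: "sorted (map (\<lambda>l. - v l) xs)" unfolding xs_def by (rule sorted_sort_key)
  define s where "s r = (if r \<in> {1..n} then xs ! (r - 1) else r)" for r
  have "bij_betw s {1..n} {1..n}"
  proof (rule bij_betw_imageI)
    show "inj_on s {1..n}"
    proof (rule inj_onI)
      fix x y assume "x \<in> {1..n}" "y \<in> {1..n}" "s x = s y"
      then have "xs ! (x - 1) = xs ! (y - 1)" by (simp add: s_def)
      moreover have "x - 1 < length xs" "y - 1 < length xs" using lx \<open>x \<in> {1..n}\<close> \<open>y \<in> {1..n}\<close> by auto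
      ultimately have "x - 1 = y - 1" using nth_eq_iff_index_eq[OF dx] by blast
      moreover have "1 \<le> x" "1 \<le> y" using \<open>x \<in> {1..n}\<close> \<open>y \<in> {1..n}\<close> by auto
      ultimately show "x = y" using eq_diff_iff[of 1 x y] by blast
    qed
    show "s ` {1..n} = {1..n}"
    proof
      show "s ` {1..n} \<subseteq> {1..n}"
      proof
        fix y assume "y \<in> s ` {1..n}"
        then obtain x where x: "x \<in> {1..n}" "y = xs ! (x - 1)" by (auto simp: s_def)
        then have "x - 1 < length xs" using lx by auto
        then have "y \<in> set xs" using x by simp
        then show "y \<in> {1..n}" using sx by simp
      qed
      show "{1..n} \<subseteq> s ` {1..n}"
      proof
        fix y assume "y \<in> {1..n}"
        then obtain i where "i < n" "xs ! i = y" using sx lx by (metis in_set_conv_nth)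
        then have "s (i+1) = y" by (simp add: s_def)
        then show "y \<in> s ` {1..n}" using \<open>i < n\<close> by force
      qed
    qed
  qed
  then have "s permutes {1..n}" by (rule bij_imp_permutes) (auto simp: s_def)
  moreover have "\<forall>j. 1 \<le> j \<and> j < n \<longrightarrow> v (s (j + 1)) \<le> v (s j)"
  proof (intro allI impI)
    fix j assume j: "1 \<le> j \<and> j < n"
    have "(map (\<lambda>l. - v l) xs) ! (j-1) \<le> (map (\<lambda>l. - v l) xs) ! j"
      using so j lx by (intro sorted_nth_mono) auto
    moreover have "j - 1 < length xs" "j < length xs" using j lx by auto
    ultimately show "v (s (j + 1)) \<le> v (s j)" using j lx by (simp add: s_def)
  qed
  ultimately show ?thesis by blast
qed

lemma nth_highest_ranking:
  assumes r: "gsp_ranking n b \<pi>" and m: "m \<in> {1..n}"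
  shows "nth_highest n b m = b (inv \<pi> m)"
proof -
  have p: "\<pi> permutes {1..n}" using r by (simp add: gsp_ranking_def assignments_def)
  have pi: "inv \<pi> permutes {1..n}" using p by (rule permutes_inv)
  define ys where "ys = map (\<lambda>r. b (inv \<pi> r)) [1..<Suc n]"
  have "mset (map (inv \<pi>) [1..<Suc n]) = image_mset (inv \<pi>) (mset_set {1..<Suc n})" by (simp only: mset_map mset_upt)
  also have "\<dots> = mset_set (inv \<pi> ` {1..<Suc n})"
    by (rule image_mset_mset_set) (meson permutes_inj_on pi)
  also have "inv \<pi> ` {1..<Suc n} = {1..<Suc n}"
    using permutes_image[OF pi] by (simp add: atLeastLessThanSuc_atLeastAtMost)
  also have "mset_set {1..<Suc n} = mset [1..<Suc n]" by (rule mset_upt[symmetric])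
  finally have "mset (map (inv \<pi>) [1..<Suc n]) = mset [1..<Suc n]" .
  then have "image_mset b (mset (map (inv \<pi>) [1..<Suc n])) = image_mset b (mset [1..<Suc n])" by simp
  then have "mset ys = mset (map b [1..<Suc n])"
    unfolding ys_def by (simp add: image_mset.compositionality o_def del: upt_Suc)
  then have m1: "mset (rev ys) = mset (map b [1..<Suc n])" by simp
  have rk: "\<forall>i\<in>{1..n}. \<forall>l\<in>{1..n}. \<pi> i < \<pi> l \<longrightarrow> b l \<le> b i"
    using r by (simp add: gsp_ranking_def)
  have "sorted (rev ys)"
  proof -
    have "\<forall>i j. i \<le> j \<longrightarrow> j < length ys \<longrightarrow> ys ! j \<le> ys ! i"
    proof (intro allI impI)
      fix i j assume "i \<le> j" "j < length ys"
      then have jn: "j < n" by (simp add: ys_def del: upt_Suc)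
      show "ys ! j \<le> ys ! i"
      proof (cases "i = j")
        case True then show ?thesis by simp
      next
        case False
        have "\<pi> (inv \<pi> (i+1)) < \<pi> (inv \<pi> (j+1))" using False \<open>i \<le> j\<close>
          by (simp add: permutes_inverses(1)[OF p])
        moreover have "inv \<pi> (i+1) \<in> {1..n}" "inv \<pi> (j+1) \<in> {1..n}"
          using jn \<open>i \<le> j\<close> permutes_in_image[OF pi, of "i+1"] permutes_in_image[OF pi, of "j+1"] by simp_all
        ultimately have "b (inv \<pi> (j+1)) \<le> b (inv \<pi> (i+1))"
          using rk by blast
        moreover have "ys ! j = b (inv \<pi> (j+1))" "ys ! i = b (inv \<pi> (i+1))"
          using jn \<open>i \<le> j\<close> by (simp_all add: ys_def del: upt_Suc)
        ultimately show ?thesis by simp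
      qed
    qed
    then show ?thesis by (simp only: sorted_rev_iff_nth_mono)
  qed
  then have "sort (map b [1..<Suc n]) = rev ys" using m1 by (intro properties_for_sort) auto
  then have "nth_highest n b m = ys ! (m - 1)" using m by (simp add: nth_highest_def)
  moreover have "m - 1 < n" "m - 1 + 1 = m" using m by auto
  moreover have "ys ! (m-1) = b (inv \<pi> (m - 1 + 1))"
    using \<open>m - 1 < n\<close> by (simp add: ys_def del: upt_Suc)
  ultimately show ?thesis by simp
qed



definition Ssum :: "nat \<Rightarrow> (nat \<Rightarrow> real) \<Rightarrow> (nat \<Rightarrow> nat) \<Rightarrow> nat \<Rightarrow> real" where
  "Ssum n u \<pi> t = sum u {l\<in>{1..n}. \<pi> l \<le> t}"

lemma d_pos:
  assumes "in_Rn_gt n k \<beta>" "1 \<le> t" "t \<le> k"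
  shows "0 < \<beta> t - \<beta> (t+1)"
proof (cases "t < k")
  case True then show ?thesis using assms unfolding in_Rn_gt_def by auto
next
  case False
  then have "t = k" using assms by simp
  then show ?thesis using assms unfolding in_Rn_gt_def by auto
qed

lemma beta_tel:
  assumes b: "in_Rn_gt n k \<beta>" and r: "r \<in> {1..n}"
  shows "\<beta> r = (\<Sum>t=r..k. \<beta> t - \<beta> (t+1))"
proof (cases "r \<le> k + 1")
  case True
  have "(\<Sum>t=r..k. (- \<beta>) (Suc t) - (- \<beta>) t) = (- \<beta>) (Suc k) - (- \<beta>) r"
    using True by (intro sum_Suc_diff) simp
  moreover have "\<beta> (k+1) = 0" using b unfolding in_Rn_gt_def by auto
  ultimately show ?thesis by simp
next
  case False
  then have "\<beta> r = 0" using b r unfolding in_Rn_gt_def by auto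
  then show ?thesis using False by simp
qed

lemma welfare_abel:
  assumes b: "in_Rn_gt n k \<beta>" and p: "\<pi> permutes {1..n}"
  shows "welfare n \<beta> u \<pi> = (\<Sum>t=1..k. (\<beta> t - \<beta> (t+1)) * Ssum n u \<pi> t)"
proof -
  have "welfare n \<beta> u \<pi> = (\<Sum>l\<in>{1..n}. \<Sum>t\<in>{1..k}. if \<pi> l \<le> t then (\<beta> t - \<beta> (t+1)) * u l else 0)"
    unfolding welfare_def
  proof (rule sum.cong[OF refl])
    fix l assume l: "l \<in> {1..n}"
    then have pl: "\<pi> l \<in> {1..n}" using permutes_in_image[OF p] by simp
    have "\<beta> (\<pi> l) = (\<Sum>t=\<pi> l..k. \<beta> t - \<beta> (t+1))" using beta_tel[OF b pl] .
    also have "\<dots> = (\<Sum>t\<in>{1..k}. if \<pi> l \<le> t then \<beta> t - \<beta> (t+1) else 0)"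
    proof -
      have e: "{\<pi> l..k} = {t\<in>{1..k}. \<pi> l \<le> t}" using pl by auto
      show ?thesis unfolding e by (rule sum.inter_filter) simp
    qed
    finally show "\<beta> (\<pi> l) * u l = (\<Sum>t\<in>{1..k}. if \<pi> l \<le> t then (\<beta> t - \<beta> (t+1)) * u l else 0)"
      by (auto simp: sum_distrib_right intro!: sum.cong)
  qed
  also have "\<dots> = (\<Sum>t\<in>{1..k}. \<Sum>l\<in>{1..n}. if \<pi> l \<le> t then (\<beta> t - \<beta> (t+1)) * u l else 0)"
    by (rule sum.swap)
  also have "\<dots> = (\<Sum>t=1..k. (\<beta> t - \<beta> (t+1)) * Ssum n u \<pi> t)"
    unfolding Ssum_def sum_distrib_left
    by (rule sum.cong[OF refl], rule sum.inter_filter[symmetric]) simp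
  finally show ?thesis .
qed

lemma S_card:
  assumes p: "\<pi> permutes {1..n}"
  shows "card {l\<in>{1..n}. \<pi> l \<le> t} \<le> t"
proof -
  have "card {l\<in>{1..n}. \<pi> l \<le> t} \<le> card {1..t}"
  proof (rule card_inj_on_le)
    show "inj_on \<pi> {l \<in> {1..n}. \<pi> l \<le> t}" using permutes_inj_on[OF p] .
    show "\<pi> ` {l \<in> {1..n}. \<pi> l \<le> t} \<subseteq> {1..t}"
      using permutes_in_image[OF p] by force
  qed simp
  then show ?thesis by simp
qed

lemma S_sorted:
  assumes s: "s permutes {1..n}" and t: "t \<le> n"
  shows "{l\<in>{1..n}. inv s l \<le> t} = s ` {1..t}"
    and "Ssum n u (inv s) t = sum (u \<circ> s) {1..t}"
proof -
  show e: "{l\<in>{1..n}. inv s l \<le> t} = s ` {1..t}"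
  proof
    show "{l\<in>{1..n}. inv s l \<le> t} \<subseteq> s ` {1..t}"
    proof
      fix l assume l: "l \<in> {l\<in>{1..n}. inv s l \<le> t}"
      then have "inv s l \<in> {1..n}" using permutes_in_image[OF permutes_inv[OF s]] by simp
      then have "inv s l \<in> {1..t}" using l by simp
      moreover have "s (inv s l) = l" using permutes_inverses(1)[OF s] .
      ultimately show "l \<in> s ` {1..t}" by (metis image_eqI)
    qed
    show "s ` {1..t} \<subseteq> {l\<in>{1..n}. inv s l \<le> t}"
    proof
      fix l assume "l \<in> s ` {1..t}"
      then obtain r where r: "r \<in> {1..t}" "l = s r" by blast
      then have "r \<in> {1..n}" using t by simp
      then have "l \<in> {1..n}" using r permutes_in_image[OF s] by simp
      moreover have "inv s l = r" using r permutes_inverses(2)[OF s] by simp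
      ultimately show "l \<in> {l\<in>{1..n}. inv s l \<le> t}" using r by simp
    qed
  qed
  have "Ssum n u (inv s) t = sum u (s ` {1..t})" unfolding Ssum_def e ..
  also have "\<dots> = sum (u \<circ> s) {1..t}"
    by (rule sum.reindex) (meson permutes_inj_on s)
  finally show "Ssum n u (inv s) t = sum (u \<circ> s) {1..t}" .
qed

lemma subset_le_agents:
  fixes v :: "nat \<Rightarrow> real"
  assumes s: "s permutes {1..n}" and dec: "\<forall>j. 1 \<le> j \<and> j < n \<longrightarrow> v (s (j + 1)) \<le> v (s j)"
    and nn: "\<forall>l\<in>{1..n}. 0 \<le> v l"
    and A: "A \<subseteq> {1..n}" "card A \<le> t" "t \<le> n"
  shows "sum v A \<le> sum (v \<circ> s) {1..t}"
proof -
  have si: "inv s permutes {1..n}" using permutes_inv[OF s] .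
  have "sum v A = sum (v \<circ> s) (inv s ` A)"
  proof -
    have "sum (v \<circ> s) (inv s ` A) = sum (v \<circ> s \<circ> inv s) A"
      by (rule sum.reindex) (meson permutes_inj_on si)
    also have "\<dots> = sum v A" by (simp add: o_def permutes_inverses(1)[OF s])
    finally show ?thesis by simp
  qed
  also have "\<dots> \<le> sum (v \<circ> s) {1..t}"
  proof (rule subset_le[where w="v \<circ> s" and n=n])
    show "\<forall>j. 1 \<le> j \<and> j < n \<longrightarrow> (v \<circ> s) (j + 1) \<le> (v \<circ> s) j" using dec by simp
    show "\<forall>r\<in>{1..n}. 0 \<le> (v \<circ> s) r" using nn permutes_in_image[OF s] by simp
    show "inv s ` A \<subseteq> {1..n}" using A permutes_image[OF si] by blast
    show "card (inv s ` A) \<le> t" using A card_image_le[of A "inv s"] finite_subset[OF A(1)] by simp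
    show "t \<le> n" using A by simp
  qed
  finally show ?thesis .
qed



lemma kn: "in_Rn_gt n k \<beta> \<Longrightarrow> k \<le> n" by (simp add: in_Rn_gt_def)

lemma max_welfare:
  fixes u U :: "nat \<Rightarrow> real"
  assumes b: "in_Rn_gt n k \<beta>" and nn: "\<forall>l\<in>{1..n}. 0 \<le> u l"
    and ub: "\<And>t A. t \<in> {1..k} \<Longrightarrow> A \<subseteq> {1..n} \<Longrightarrow> card A \<le> t \<Longrightarrow> sum u A \<le> U t"
    and at: "\<And>t. t \<in> {1..k} \<Longrightarrow> \<exists>A\<subseteq>{1..n}. card A \<le> t \<and> sum u A = U t"
  shows "Max (welfare n \<beta> u ` assignments n) = (\<Sum>t=1..k. (\<beta> t - \<beta> (t+1)) * U t)"
    and "\<forall>\<pi>\<in>assignments n. welfare n \<beta> u \<pi> \<le> (\<Sum>t=1..k. (\<beta> t - \<beta> (t+1)) * U t)"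
proof -
  obtain s where s: "s permutes {1..n}" and dec: "\<forall>j. 1 \<le> j \<and> j < n \<longrightarrow> u (s (j + 1)) \<le> u (s j)"
    using sort_perm_exists[of n u] by blast
  have k: "k \<le> n" using kn[OF b] .
  have T: "Ssum n u (inv s) t = U t" if t: "t \<in> {1..k}" for t
  proof -
    have tn: "t \<le> n" using t k by simp
    have e: "Ssum n u (inv s) t = sum (u \<circ> s) {1..t}" using S_sorted(2)[OF s tn] .
    obtain A where A: "A \<subseteq> {1..n}" "card A \<le> t" "sum u A = U t" using at[OF t] by blast
    have "U t \<le> sum (u \<circ> s) {1..t}"
      using subset_le_agents[OF s dec nn A(1) A(2) tn] A(3) by simp
    moreover have "Ssum n u (inv s) t \<le> U t"
    proof -
      have "Ssum n u (inv s) t = sum u (s ` {1..t})"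
        unfolding Ssum_def S_sorted(1)[OF s tn] ..
      also have "\<dots> \<le> U t"
      proof (rule ub[OF t])
        show "s ` {1..t} \<subseteq> {1..n}" using tn permutes_image[OF s] by auto
        show "card (s ` {1..t}) \<le> t" using card_image_le[of "{1..t}" s] by simp
      qed
      finally show ?thesis .
    qed
    ultimately show ?thesis using e by simp
  qed
  have si: "inv s \<in> assignments n" using permutes_inv[OF s] by (simp add: assignments_def)
  have W: "welfare n \<beta> u (inv s) = (\<Sum>t=1..k. (\<beta> t - \<beta> (t+1)) * U t)"
    unfolding welfare_abel[OF b permutes_inv[OF s]] using T by (intro sum.cong) auto
  show ub2: "\<forall>\<pi>\<in>assignments n. welfare n \<beta> u \<pi> \<le> (\<Sum>t=1..k. (\<beta> t - \<beta> (t+1)) * U t)"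
  proof
    fix \<pi> assume "\<pi> \<in> assignments n"
    then have p: "\<pi> permutes {1..n}" by (simp add: assignments_def)
    show "welfare n \<beta> u \<pi> \<le> (\<Sum>t=1..k. (\<beta> t - \<beta> (t+1)) * U t)"
      unfolding welfare_abel[OF b p]
    proof (rule sum_mono)
      fix t assume t: "t \<in> {1..k}"
      have "Ssum n u \<pi> t \<le> U t" unfolding Ssum_def
        by (rule ub[OF t]) (use S_card[OF p, of t] in auto)
      moreover have "0 \<le> \<beta> t - \<beta> (t+1)" using d_pos[OF b] t by (simp add: less_imp_le)
      ultimately show "(\<beta> t - \<beta> (t+1)) * Ssum n u \<pi> t \<le> (\<beta> t - \<beta> (t+1)) * U t"
        by (rule mult_left_mono)
    qed
  qed
  show "Max (welfare n \<beta> u ` assignments n) = (\<Sum>t=1..k. (\<beta> t - \<beta> (t+1)) * U t)"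
  proof (rule Max_eqI)
    show "finite (welfare n \<beta> u ` assignments n)"
      by (simp add: assignments_def finite_permutations)
    show "y \<le> (\<Sum>t=1..k. (\<beta> t - \<beta> (t+1)) * U t)" if "y \<in> welfare n \<beta> u ` assignments n" for y
      using ub2 that by blast
    show "(\<Sum>t=1..k. (\<beta> t - \<beta> (t+1)) * U t) \<in> welfare n \<beta> u ` assignments n"
      using W si by (metis image_eqI)
  qed
qed



lemma sum_upd0:
  fixes v :: "nat \<Rightarrow> real"
  assumes "finite A"
  shows "sum (v(i:=0)) A = sum v (A - {i})"
proof (cases "i \<in> A")
  case True
  then have "sum (v(i:=0)) A = (v(i:=0)) i + sum (v(i:=0)) (A - {i})"
    using assms by (simp add: sum.remove)
  also have "sum (v(i:=0)) (A - {i}) = sum v (A - {i})" by (rule sum.cong) auto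
  finally show ?thesis by simp
next
  case False
  then have "A - {i} = A" by simp
  then show ?thesis using False by (metis fun_upd_other sum.cong)
qed

lemma others_welfare_upd:
  assumes "i \<in> {1..n}"
  shows "others_welfare n \<beta> v \<pi> i = welfare n \<beta> (v(i:=0)) \<pi>"
proof -
  have "welfare n \<beta> (v(i:=0)) \<pi> = (\<beta> (\<pi> i) * (v(i:=0)) i) + (\<Sum>l\<in>{1..n} - {i}. \<beta> (\<pi> l) * (v(i:=0)) l)"
    unfolding welfare_def using assms by (simp add: sum.remove)
  also have "(\<Sum>l\<in>{1..n} - {i}. \<beta> (\<pi> l) * (v(i:=0)) l) = others_welfare n \<beta> v \<pi> i"
    unfolding others_welfare_def by (rule sum.cong) auto
  finally show ?thesis by (simp add: fun_upd_def)
qed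

lemma Ssum_0:
  assumes p: "\<pi> permutes {1..n}"
  shows "Ssum n u \<pi> 0 = 0"
proof -
  have "{l\<in>{1..n}. \<pi> l \<le> 0} = {}"
  proof (rule equals0I)
    fix l assume "l \<in> {l\<in>{1..n}. \<pi> l \<le> 0}"
    then have "l \<in> {1..n}" "\<pi> l \<le> 0" by auto
    then have "\<pi> l \<in> {1..n}" using permutes_in_image[OF p, of l] by blast
    then show False using \<open>\<pi> l \<le> 0\<close> by simp
  qed
  then show ?thesis unfolding Ssum_def by (simp only: sum.empty)
qed

lemma max_welfare_sorted:
  fixes v :: "nat \<Rightarrow> real"
  assumes b: "in_Rn_gt n k \<beta>" and nn: "\<forall>l\<in>{1..n}. 0 \<le> v l"
    and s: "s permutes {1..n}" and dec: "\<forall>j. 1 \<le> j \<and> j < n \<longrightarrow> v (s (j + 1)) \<le> v (s j)"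
  shows "Max (welfare n \<beta> v ` assignments n) = (\<Sum>t=1..k. (\<beta> t - \<beta> (t+1)) * sum (v \<circ> s) {1..t})"
    and "\<forall>\<pi>\<in>assignments n. welfare n \<beta> v \<pi> \<le> (\<Sum>t=1..k. (\<beta> t - \<beta> (t+1)) * sum (v \<circ> s) {1..t})"
proof -
  have k: "k \<le> n" using kn[OF b] .
  have ub: "sum v A \<le> sum (v \<circ> s) {1..t}" if "t \<in> {1..k}" "A \<subseteq> {1..n}" "card A \<le> t" for t A
    using subset_le_agents[OF s dec nn that(2,3)] that k by simp
  have at: "\<exists>A\<subseteq>{1..n}. card A \<le> t \<and> sum v A = sum (v \<circ> s) {1..t}" if t: "t \<in> {1..k}" for t
  proof (intro exI conjI)
    show "s ` {1..t} \<subseteq> {1..n}" using t k permutes_image[OF s] by auto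
    show "card (s ` {1..t}) \<le> t" using card_image_le[of "{1..t}" s] by simp
    show "sum v (s ` {1..t}) = sum (v \<circ> s) {1..t}"
      by (rule sum.reindex) (meson permutes_inj_on s)
  qed
  show "Max (welfare n \<beta> v ` assignments n) = (\<Sum>t=1..k. (\<beta> t - \<beta> (t+1)) * sum (v \<circ> s) {1..t})"
    by (rule max_welfare(1)[OF b nn ub at])
  show "\<forall>\<pi>\<in>assignments n. welfare n \<beta> v \<pi> \<le> (\<Sum>t=1..k. (\<beta> t - \<beta> (t+1)) * sum (v \<circ> s) {1..t})"
    by (rule max_welfare(2)[OF b nn ub at])
qed

lemma maximizer_S:
  fixes v :: "nat \<Rightarrow> real"
  assumes b: "in_Rn_gt n k \<beta>" and nn: "\<forall>l\<in>{1..n}. 0 \<le> v l"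
    and s: "s permutes {1..n}" and dec: "\<forall>j. 1 \<le> j \<and> j < n \<longrightarrow> v (s (j + 1)) \<le> v (s j)"
    and pa: "\<pi> \<in> assignments n" and mx: "\<forall>\<pi>'\<in>assignments n. welfare n \<beta> v \<pi>' \<le> welfare n \<beta> v \<pi>"
    and t: "t \<le> k"
  shows "Ssum n v \<pi> t = sum (v \<circ> s) {1..t}"
proof -
  have p: "\<pi> permutes {1..n}" using pa by (simp add: assignments_def)
  have k: "k \<le> n" using kn[OF b] .
  let ?d = "\<lambda>t. \<beta> t - \<beta> (t+1)"
  let ?T = "\<lambda>t. sum (v \<circ> s) {1..t}"
  have fin: "finite (welfare n \<beta> v ` assignments n)" by (simp add: assignments_def finite_permutations)
  have "Max (welfare n \<beta> v ` assignments n) \<in> welfare n \<beta> v ` assignments n"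
    using fin pa by (intro Max_in) auto
  then have "Max (welfare n \<beta> v ` assignments n) \<le> welfare n \<beta> v \<pi>" using mx by auto
  moreover have "welfare n \<beta> v \<pi> \<le> Max (welfare n \<beta> v ` assignments n)" using fin pa by (intro Max_ge) auto
  ultimately have "welfare n \<beta> v \<pi> = (\<Sum>t=1..k. ?d t * ?T t)"
    using max_welfare_sorted(1)[OF b nn s dec] by simp
  define f where "f t = ?d t * (?T t - Ssum n v \<pi> t)" for t
  have "(\<Sum>t=1..k. ?d t * (?T t - Ssum n v \<pi> t)) = 0"
    using \<open>welfare n \<beta> v \<pi> = (\<Sum>t=1..k. ?d t * ?T t)\<close>
    unfolding welfare_abel[OF b p] by (simp add: right_diff_distrib sum_subtractf)
  then have f0: "sum f {1..k} = 0" unfolding f_def .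
  have le: "Ssum n v \<pi> t \<le> ?T t" if "t \<le> k" for t
    unfolding Ssum_def using S_card[OF p, of t] that k
    by (intro subset_le_agents[OF s dec nn]) auto
  have "\<forall>t\<in>{1..k}. 0 \<le> ?d t * (?T t - Ssum n v \<pi> t)"
  proof
    fix t assume t: "t \<in> {1..k}"
    then have "0 < ?d t" using d_pos[OF b] by simp
    moreover have "0 \<le> ?T t - Ssum n v \<pi> t" using le t by simp
    ultimately show "0 \<le> ?d t * (?T t - Ssum n v \<pi> t)" by simp
  qed
  then have "\<forall>t\<in>{1..k}. 0 \<le> f t" unfolding f_def .
  then have "\<forall>t\<in>{1..k}. f t = 0" using sum_nonneg_eq_0_iff[of "{1..k}" f] f0 by simp
  then have z: "\<forall>t\<in>{1..k}. ?d t * (?T t - Ssum n v \<pi> t) = 0" unfolding f_def .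
  show ?thesis
  proof (cases "t = 0")
    case True then show ?thesis using Ssum_0[OF p] by simp
  next
    case False
    then have "?d t * (?T t - Ssum n v \<pi> t) = 0" using z t by simp
    moreover have "?d t > 0" using d_pos[OF b] t False by simp
    ultimately show ?thesis by simp
  qed
qed



lemma T_Suc:
  fixes w :: "nat \<Rightarrow> real"
  shows "sum w {1..t+1} = sum w {1..t} + w (t+1)"
  by (simp add: sum.cl_ivl_Suc)

lemma clarke_pos:
  fixes v :: "nat \<Rightarrow> real"
  assumes b: "in_Rn_gt n k \<beta>" and nn: "\<forall>l\<in>{1..n}. 0 \<le> v l"
    and s: "s permutes {1..n}" and dec: "\<forall>j. 1 \<le> j \<and> j < n \<longrightarrow> v (s (j + 1)) \<le> v (s j)"
    and pa: "\<pi> \<in> assignments n" and mx: "\<forall>\<pi>'\<in>assignments n. welfare n \<beta> v \<pi>' \<le> welfare n \<beta> v \<pi>"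
    and i: "i \<in> {1..n}" and j: "\<pi> i = j" and jk: "j \<le> k"
  shows "clarke_payment n \<beta> v \<pi> i = p_seq n k \<beta> (v \<circ> s) j"
proof -
  have p: "\<pi> permutes {1..n}" using pa by (simp add: assignments_def)
  have k: "k \<le> n" using kn[OF b] .
  have j1: "1 \<le> j" using permutes_in_image[OF p, of i] i j by simp
  define w where "w = v \<circ> s"
  define T where "T t = sum w {1..t}" for t
  define X where "X t = {l\<in>{1..n}. \<pi> l \<le> t}" for t
  have Xsub: "X t \<subseteq> {1..n}" for t unfolding X_def by auto
  have Xfin: "finite (X t)" for t unfolding X_def by auto
  have Xcard: "card (X t) \<le> t" for t unfolding X_def using S_card[OF p] .
  have SX: "sum v (X t) = T t" if "t \<le> k" for t
    using maximizer_S[OF b nn s dec pa mx that] unfolding Ssum_def X_def T_def w_def .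
  have wdec: "\<forall>j. 1 \<le> j \<and> j < n \<longrightarrow> w (j + 1) \<le> w j" using dec by (simp add: w_def)
  have vi: "v i = w j"
  proof -
    obtain j' where j': "j = Suc j'" using j1 by (cases j) auto
    have injp: "\<And>x. \<pi> x = \<pi> i \<Longrightarrow> x = i" using permutes_inj[OF p] by (meson injD)
    have "X j = insert i (X j')"
    proof (rule set_eqI)
      fix x
      show "x \<in> X j \<longleftrightarrow> x \<in> insert i (X j')"
      proof (cases "x = i")
        case True then show ?thesis unfolding X_def using i j j' by simp
      next
        case False
        then have "\<pi> x \<noteq> j" using injp[of x] j by auto
        then have "\<pi> x \<le> j \<longleftrightarrow> \<pi> x \<le> j'" using j' by linarith
        then show ?thesis unfolding X_def using False by simp
      qed
    qed
    moreover have "i \<notin> X j'" unfolding X_def using j j' by simp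
    ultimately have "sum v (X j) = v i + sum v (X j')" using Xfin by simp
    moreover have "T j = T j' + w j"
    proof -
      have "T (j'+1) = T j' + w (j'+1)" unfolding T_def by (rule T_Suc)
      then show ?thesis using j' by simp
    qed
    moreover have "sum v (X j) = T j" using SX jk by blast
    moreover have "sum v (X j') = T j'" using SX jk j' by simp
    ultimately show ?thesis by linarith
  qed
  have iX: "i \<in> X t \<longleftrightarrow> j \<le> t" for t unfolding X_def using i j by auto
  define v' where "v' = v(i:=0)"
  have nn': "\<forall>l\<in>{1..n}. 0 \<le> v' l" using nn by (simp add: v'_def)
  have sv': "sum v' A = sum v (A - {i})" if "finite A" for A
    unfolding v'_def using sum_upd0[OF that] .
  define U where "U t = (if t < j then T t else T (min (t+1) n) - w j)" for t
  have ub: "sum v' A \<le> U t" if t: "t \<in> {1..k}" and A: "A \<subseteq> {1..n}" "card A \<le> t" for t A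
  proof -
    have fA: "finite A" using A finite_subset by blast
    have c1: "card (A - {i}) \<le> t" using A card_Diff1_le[of A i] by simp
    show ?thesis
    proof (cases "t < j")
      case True
      have "sum v (A - {i}) \<le> T t" unfolding T_def w_def
        using A c1 t k by (intro subset_le_agents[OF s dec nn]) auto
      then show ?thesis using True sv'[OF fA] by (simp add: U_def)
    next
      case False
      let ?m = "min (t+1) n"
      have "card (insert i (A - {i})) \<le> t + 1" using c1 card_insert_le_m1 fA
        by (metis Suc_eq_plus1 card_insert_if finite_Diff le_SucI Suc_le_mono)
      moreover have "card (insert i (A - {i})) \<le> n"
        using card_mono[of "{1..n}" "insert i (A - {i})"] A i by auto
      ultimately have "sum v (insert i (A - {i})) \<le> T ?m" unfolding T_def w_def
        using A i by (intro subset_le_agents[OF s dec nn]) auto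
      moreover have "sum v (insert i (A - {i})) = v i + sum v (A - {i})"
        by (rule sum.insert) (use fA in auto)
      ultimately show ?thesis using False sv'[OF fA] vi by (simp add: U_def)
    qed
  qed
  have at: "\<exists>A\<subseteq>{1..n}. card A \<le> t \<and> sum v' A = U t" if t: "t \<in> {1..k}" for t
  proof (cases "t < j")
    case True
    have "i \<notin> X t" using iX True by simp
    then have "sum v' (X t) = sum v (X t)" using sv'[OF Xfin] by simp
    then have "sum v' (X t) = U t" using SX[of t] t True by (simp add: U_def)
    then show ?thesis using Xsub Xcard by blast
  next
    case False
    then have iXt: "i \<in> X t" using iX by simp
    show ?thesis
    proof (cases "t + 1 \<le> n")
      case True
      define Y where "Y = s ` {1..t+1}"
      have "card Y = t + 1" unfolding Y_def
        by (subst card_image) (auto intro: inj_on_subset[OF permutes_inj_on[OF s]])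
      have "\<not> Y \<subseteq> X t"
      proof
        assume "Y \<subseteq> X t"
        then have "card Y \<le> card (X t)" using card_mono[OF Xfin] by blast
        then show False using \<open>card Y = t + 1\<close> Xcard[of t] by simp
      qed
      then obtain a where aY: "a \<in> Y" and aX: "a \<notin> X t" by blast
      then obtain r where r: "r \<in> {1..t+1}" "a = s r" unfolding Y_def by blast
      have an: "a \<in> {1..n}" using r True permutes_in_image[OF s, of r] by auto
      have "w (t+1) \<le> w r" using dec_mono[OF wdec] r True by simp
      then have va: "w (t+1) \<le> v a" using r by (simp add: w_def)
      have ins: "sum v (insert a (X t)) = v a + T t" using aX Xfin SX[of t] t by simp
      have "card (insert a (X t)) \<le> t + 1" using Xcard[of t] Xfin aX by simp
      then have "sum v (insert a (X t)) \<le> T (t+1)" unfolding T_def w_def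
        using Xsub an True by (intro subset_le_agents[OF s dec nn]) auto
      then have eq: "sum v (insert a (X t)) = T (t+1)" using ins va T_Suc[of w t] by (simp add: T_def)
      define A where "A = insert a (X t) - {i}"
      have ai: "a \<noteq> i" using aX iXt by auto
      have "sum v' A = sum v A" using sv'[of A] Xfin by (simp add: A_def)
      also have "sum v A = sum v (insert a (X t)) - v i"
        unfolding A_def using Xfin iXt by (simp add: sum_diff1)
      finally have "sum v' A = U t" using eq vi False True by (simp add: U_def)
      moreover have "A \<subseteq> {1..n}" using Xsub an by (auto simp: A_def)
      moreover have "card A \<le> t" unfolding A_def using Xcard[of t] Xfin aX iXt by simp
      ultimately show ?thesis by blast
    next
      case False
      then have tn: "t = n" using t k by simp
      define A where "A = X t - {i}"
      have "sum v' A = sum v A" using sv'[of A] Xfin by (simp add: A_def)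
      also have "sum v A = sum v (X t) - v i"
        unfolding A_def using Xfin iXt by (simp add: sum_diff1)
      finally have "sum v' A = U t" using SX[of t] t vi \<open>\<not> t < j\<close> tn by (simp add: U_def)
      moreover have "A \<subseteq> {1..n}" using Xsub by (auto simp: A_def)
      moreover have "card A \<le> t" unfolding A_def using Xcard[of t] Xfin iXt
        by (meson card_Diff1_le le_trans)
      ultimately show ?thesis by blast
    qed
  qed
  have M: "Max (welfare n \<beta> v' ` assignments n) = (\<Sum>t=1..k. (\<beta> t - \<beta> (t+1)) * U t)"
    using max_welfare(1)[OF b nn' ub at] by blast
  have img: "(\<lambda>\<pi>'. others_welfare n \<beta> v \<pi>' i) ` assignments n = welfare n \<beta> v' ` assignments n"
    unfolding v'_def using others_welfare_upd[OF i] by simp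
  have Sv': "Ssum n v' \<pi> t = T t - (if j \<le> t then w j else 0)" if "t \<le> k" for t
  proof -
    have "Ssum n v' \<pi> t = sum v (X t - {i})" unfolding Ssum_def X_def[symmetric] using sv'[OF Xfin] .
    also have "\<dots> = sum v (X t) - (if j \<le> t then v i else 0)"
      using iX[of t] Xfin by (simp add: sum_diff1)
    finally show ?thesis using SX[OF that] vi by simp
  qed
  have "clarke_payment n \<beta> v \<pi> i = (\<Sum>t=1..k. (\<beta> t - \<beta> (t+1)) * U t) - welfare n \<beta> v' \<pi>"
    unfolding clarke_payment_def img others_welfare_upd[OF i] v'_def[symmetric] M ..
  also have "welfare n \<beta> v' \<pi> = (\<Sum>t=1..k. (\<beta> t - \<beta> (t+1)) * (T t - (if j \<le> t then w j else 0)))"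
    unfolding welfare_abel[OF b p] using Sv' by (intro sum.cong) auto
  finally have "clarke_payment n \<beta> v \<pi> i =
      (\<Sum>t=1..k. (\<beta> t - \<beta> (t+1)) * (U t - (T t - (if j \<le> t then w j else 0))))"
    by (simp add: right_diff_distrib sum_subtractf)
  also have "\<dots> = (\<Sum>t\<in>{1..k}. if j \<le> t then (if t + 1 \<le> n then w (t+1) else 0) * (\<beta> t - \<beta> (t+1)) else 0)"
  proof (rule sum.cong[OF refl])
    fix t assume t: "t \<in> {1..k}"
    show "(\<beta> t - \<beta> (t+1)) * (U t - (T t - (if j \<le> t then w j else 0))) =
      (if j \<le> t then (if t + 1 \<le> n then w (t+1) else 0) * (\<beta> t - \<beta> (t+1)) else 0)"
    proof (cases "j \<le> t")
      case True
      show ?thesis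
      proof (cases "t + 1 \<le> n")
        case True
        then show ?thesis using \<open>j \<le> t\<close> T_Suc[of w t] by (simp add: U_def T_def)
      next
        case False
        then have "min (t+1) n = t" using t k by simp
        then show ?thesis using \<open>j \<le> t\<close> False by (simp add: U_def T_def)
      qed
    next
      case False
      then show ?thesis by (simp add: U_def)
    qed
  qed
  also have "\<dots> = p_seq n k \<beta> w j"
  proof -
    have e: "{j..k} = {t\<in>{1..k}. j \<le> t}" using j1 by auto
    show ?thesis unfolding p_seq_def e by (rule sum.inter_filter[symmetric]) simp
  qed
  finally show ?thesis by (simp add: w_def)
qed



lemma beta_nonneg:
  assumes b: "in_Rn_gt n k \<beta>" and r: "r \<in> {1..n}"
  shows "0 \<le> \<beta> r"
proof -
  have "\<beta> r = (\<Sum>t=r..k. \<beta> t - \<beta> (t+1))" using beta_tel[OF b r] .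
  also have "\<dots> \<ge> 0"
  proof (rule sum_nonneg)
    fix t assume "t \<in> {r..k}"
    then have "1 \<le> t" "t \<le> k" using r by auto
    then show "0 \<le> \<beta> t - \<beta> (t+1)" using d_pos[OF b] by (simp add: less_imp_le)
  qed
  finally show ?thesis .
qed

lemma alpha_pos:
  assumes b: "in_Rn_gt n k \<alpha>" and m: "1 \<le> m" "m \<le> k"
  shows "0 < \<alpha> m"
proof -
  have k: "k \<le> n" using kn[OF b] .
  have "\<alpha> m = (\<Sum>t=m..k. \<alpha> t - \<alpha> (t+1))" using beta_tel[OF b] m k by simp
  also have "\<dots> > 0"
  proof (rule sum_pos)
    show "finite {m..k}" by simp
    show "{m..k} \<noteq> {}" using m by simp
    fix t assume "t \<in> {m..k}"
    then have "1 \<le> t" "t \<le> k" using m by auto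
    then show "0 < \<alpha> t - \<alpha> (t+1)" using d_pos[OF b] by simp
  qed
  finally show ?thesis .
qed

lemma clarke_zero:
  fixes v :: "nat \<Rightarrow> real"
  assumes b: "in_Rn_gt n k \<beta>" and nn: "\<forall>l\<in>{1..n}. 0 \<le> v l"
    and pa: "\<pi> \<in> assignments n" and mx: "\<forall>\<pi>'\<in>assignments n. welfare n \<beta> v \<pi>' \<le> welfare n \<beta> v \<pi>"
    and i: "i \<in> {1..n}" and jk: "k < \<pi> i"
  shows "clarke_payment n \<beta> v \<pi> i = 0"
proof -
  have p: "\<pi> permutes {1..n}" using pa by (simp add: assignments_def)
  have split: "welfare n \<beta> v \<pi>' = \<beta> (\<pi>' i) * v i + others_welfare n \<beta> v \<pi>' i" for \<pi>'
    unfolding welfare_def others_welfare_def using i by (simp add: sum.remove)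
  have "\<pi> i \<in> {1..n}" using permutes_in_image[OF p, of i] i by simp
  then have "\<beta> (\<pi> i) = 0" using b jk unfolding in_Rn_gt_def by auto
  then have o: "others_welfare n \<beta> v \<pi> i = welfare n \<beta> v \<pi>" using split[of \<pi>] by simp
  have le: "others_welfare n \<beta> v \<pi>' i \<le> welfare n \<beta> v \<pi>" if "\<pi>' \<in> assignments n" for \<pi>'
  proof -
    have p': "\<pi>' permutes {1..n}" using that by (simp add: assignments_def)
    have "\<pi>' i \<in> {1..n}" using permutes_in_image[OF p', of i] i by simp
    then have "0 \<le> \<beta> (\<pi>' i) * v i" using beta_nonneg[OF b] nn i by simp
    then show ?thesis using split[of \<pi>'] mx that by fastforce
  qed
  have "Max ((\<lambda>\<pi>'. others_welfare n \<beta> v \<pi>' i) ` assignments n) = welfare n \<beta> v \<pi>"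
  proof (rule Max_eqI)
    show "finite ((\<lambda>\<pi>'. others_welfare n \<beta> v \<pi>' i) ` assignments n)"
      by (simp add: assignments_def finite_permutations)
    show "y \<le> welfare n \<beta> v \<pi>" if "y \<in> (\<lambda>\<pi>'. others_welfare n \<beta> v \<pi>' i) ` assignments n" for y
      using that le by blast
    show "welfare n \<beta> v \<pi> \<in> (\<lambda>\<pi>'. others_welfare n \<beta> v \<pi>' i) ` assignments n"
      using o pa by (metis image_eqI)
  qed
  then show ?thesis unfolding clarke_payment_def using o by simp
qed

lemma envy_free:
  fixes w :: "nat \<Rightarrow> real"
  assumes b: "in_Rn_gt n k \<beta>"
    and dec: "\<forall>j. 1 \<le> j \<and> j < n \<longrightarrow> w (j + 1) \<le> w j" and nn: "\<forall>r\<in>{1..n}. 0 \<le> w r"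
    and m: "m \<in> {1..n}" and j: "j \<in> {1..n}"
  shows "\<beta> m * w j - p_seq n k \<beta> w m \<le> \<beta> j * w j - p_seq n k \<beta> w j"
proof -
  define d where "d t = \<beta> t - \<beta> (t+1)" for t
  define g where "g t = (if t + 1 \<le> n then w (t+1) else 0)" for t
  define G where "G m = (\<Sum>t=m..k. d t * (w j - g t))" for m
  have FG: "\<beta> m * w j - p_seq n k \<beta> w m = G m" if "m \<in> {1..n}" for m
  proof -
    have "\<beta> m = (\<Sum>t=m..k. d t)" using beta_tel[OF b that] by (simp add: d_def)
    then have "\<beta> m * w j = (\<Sum>t=m..k. d t * w j)" by (simp add: sum_distrib_right)
    moreover have "p_seq n k \<beta> w m = (\<Sum>t=m..k. d t * g t)"
      unfolding p_seq_def d_def g_def by (simp add: mult.commute)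
    ultimately show ?thesis unfolding G_def by (simp add: right_diff_distrib sum_subtractf)
  qed
  have Gs: "G m = (if m \<le> k then d m * (w j - g m) else 0) + G (Suc m)" for m
  proof (cases "m \<le> k")
    case True
    have "{m..k} = insert m {Suc m..k}" using True by auto
    then show ?thesis unfolding G_def using True by simp
  next
    case False
    then show ?thesis unfolding G_def by simp
  qed
  have dnn: "0 \<le> d t" if "1 \<le> t" "t \<le> k" for t
    using d_pos[OF b that] by (simp add: d_def)
  have wm: "w b' \<le> w a" if "1 \<le> a" "a \<le> b'" "b' \<le> n" for a b'
    using dec_mono[OF dec that] .
  have up: "G x \<le> G j" if "1 \<le> x" "x \<le> j" for x
    using that(2,1)
  proof (induction x rule: inc_induct)
    case base then show ?case by simp
  next
    case (step x)
    have "x + 1 \<le> n" using step j by simp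
    then have "w j \<le> g x" unfolding g_def using wm[of "x+1" j] step j by simp
    then have "(if x \<le> k then d x * (w j - g x) else 0) \<le> 0"
      using dnn[of x] step by (auto intro: mult_nonneg_nonpos)
    then show ?case using Gs[of x] step by simp
  qed
  have down: "G x \<le> G j" if "j \<le> x" for x
    using that
  proof (induction x rule: dec_induct)
    case base then show ?case by simp
  next
    case (step x)
    have "g x \<le> w j"
    proof (cases "x + 1 \<le> n")
      case True then show ?thesis unfolding g_def using wm[of j "x+1"] step j by simp
    next
      case False then show ?thesis unfolding g_def using nn j by simp
    qed
    then have "0 \<le> (if x \<le> k then d x * (w j - g x) else 0)"
      using dnn[of x] step j by auto
    then show ?case using Gs[of x] step by simp
  qed
  have "G m \<le> G j"
  proof (cases "m \<le> j")
    case True then show ?thesis using up m by simp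
  next
    case False then show ?thesis using down by simp
  qed
  then show ?thesis using FG[OF m] FG[OF j] by simp
qed



lemma necessity:
  fixes v :: "nat \<Rightarrow> real"
  assumes a: "in_Rn_gt n k \<alpha>" and b: "in_Rn_gt n k \<beta>" and vp: "vickrey_preserving_gsp n k \<alpha> \<beta>"
    and tp: "type_profile n v" and s: "s permutes {1..n}"
    and dec: "\<forall>j. 1 \<le> j \<and> j < n \<longrightarrow> v (s (j + 1)) \<le> v (s j)"
    and j: "1 \<le> j \<and> j < k"
  shows "p_seq n k \<beta> (v \<circ> s) (j + 1) / \<alpha> (j + 1) \<le> p_seq n k \<beta> (v \<circ> s) j / \<alpha> j"
proof -
  have nn: "\<forall>l\<in>{1..n}. 0 \<le> v l" using tp by (simp add: type_profile_def)
  have k: "k \<le> n" using kn[OF b] .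
  obtain bb \<pi> pay where vo: "vcg_outcome n \<beta> v \<pi> pay" and ne: "gsp_nash n k \<alpha> \<beta> v bb \<pi>"
    and eq: "\<forall>i\<in>{1..n}. gsp_payment n k \<alpha> bb \<pi> i = pay i"
    using vp tp unfolding vickrey_preserving_gsp_def by blast
  have pa: "\<pi> \<in> assignments n" and mx: "\<forall>\<pi>'\<in>assignments n. welfare n \<beta> v \<pi>' \<le> welfare n \<beta> v \<pi>"
    and payeq: "\<forall>i\<in>{1..n}. pay i = clarke_payment n \<beta> v \<pi> i"
    using vo unfolding vcg_outcome_def by auto
  have rk: "gsp_ranking n bb \<pi>" and bnn: "\<forall>i\<in>{1..n}. 0 \<le> bb i"
    using ne unfolding gsp_nash_def by auto
  have p: "\<pi> permutes {1..n}" using pa by (simp add: assignments_def)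
  have pi: "inv \<pi> permutes {1..n}" using permutes_inv[OF p] .
  have key: "nth_highest n bb (m+1) = p_seq n k \<beta> (v \<circ> s) m / \<alpha> m" if m: "1 \<le> m" "m \<le> k" for m
  proof -
    define ag where "ag = inv \<pi> m"
    have agn: "ag \<in> {1..n}" unfolding ag_def using permutes_in_image[OF pi, of m] m k by simp
    have pag: "\<pi> ag = m" unfolding ag_def using permutes_inverses(1)[OF p] .
    have "gsp_payment n k \<alpha> bb \<pi> ag = \<alpha> m * nth_highest n bb (m+1)"
      unfolding gsp_payment_def using pag m by simp
    moreover have "gsp_payment n k \<alpha> bb \<pi> ag = p_seq n k \<beta> (v \<circ> s) m"
      using eq agn payeq clarke_pos[OF b nn s dec pa mx agn pag m(2)] by simp
    moreover have "0 < \<alpha> m" using alpha_pos[OF a m] .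
    ultimately show ?thesis by (simp add: field_simps)
  qed
  have jn: "j + 1 \<in> {1..n}" using j k by simp
  have h1: "nth_highest n bb (j+1) = bb (inv \<pi> (j+1))" using nth_highest_ranking[OF rk jn] .
  have "nth_highest n bb (j+1+1) \<le> nth_highest n bb (j+1)"
  proof (cases "j + 2 \<le> n")
    case True
    then have jn2: "j + 2 \<in> {1..n}" by simp
    have h2: "nth_highest n bb (j+1+1) = bb (inv \<pi> (j+2))" using nth_highest_ranking[OF rk jn2] by simp
    have "\<pi> (inv \<pi> (j+1)) < \<pi> (inv \<pi> (j+2))" by (simp add: permutes_inverses(1)[OF p])
    moreover have "inv \<pi> (j+1) \<in> {1..n}" "inv \<pi> (j+2) \<in> {1..n}"
      using jn jn2 permutes_in_image[OF pi, of "j+1"] permutes_in_image[OF pi, of "j+2"] by simp_all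
    ultimately have "bb (inv \<pi> (j+2)) \<le> bb (inv \<pi> (j+1))"
      using rk unfolding gsp_ranking_def by blast
    then show ?thesis using h1 h2 by simp
  next
    case False
    then have "nth_highest n bb (j+1+1) = 0" by (simp add: nth_highest_def)
    moreover have "inv \<pi> (j+1) \<in> {1..n}" using jn permutes_in_image[OF pi, of "j+1"] by simp
    ultimately show ?thesis using h1 bnn by simp
  qed
  then show ?thesis using key[of "j+1"] key[of j] j by simp
qed



lemma deviation_bid:
  fixes c :: "nat \<Rightarrow> real"
  assumes cmono: "\<And>a b'. 1 \<le> a \<Longrightarrow> a \<le> b' \<Longrightarrow> b' \<le> n \<Longrightarrow> c b' \<le> c a"
    and s: "s permutes {1..n}" and i: "i \<in> {1..n}"
    and rk: "gsp_ranking n ((\<lambda>l. c (inv s l))(i := c')) \<pi>'"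
    and mn: "\<pi>' i + 1 \<le> n"
  shows "c (\<pi>' i + 1) \<le> ((\<lambda>l. c (inv s l))(i := c')) (inv \<pi>' (\<pi>' i + 1))"
proof (rule ccontr)
  define m where "m = \<pi>' i"
  define bb' where "bb' = (\<lambda>l. c (inv s l))(i := c')"
  define x where "x = inv \<pi>' (m+1)"
  assume "\<not> ?thesis"
  then have lt: "bb' x < c (m+1)" unfolding bb'_def x_def m_def by simp
  have p': "\<pi>' permutes {1..n}" using rk by (simp add: gsp_ranking_def assignments_def)
  have rk': "\<forall>i\<in>{1..n}. \<forall>l\<in>{1..n}. \<pi>' i < \<pi>' l \<longrightarrow> bb' l \<le> bb' i"
    using rk unfolding gsp_ranking_def bb'_def by blast
  have m1: "1 \<le> m" using permutes_in_image[OF p', of i] i by (simp add: m_def)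
  have mn': "m + 1 \<le> n" using mn by (simp add: m_def)
  have xn: "x \<in> {1..n}" unfolding x_def
    using permutes_in_image[OF permutes_inv[OF p'], of "m+1"] mn' by simp
  have px: "\<pi>' x = m + 1" unfolding x_def using permutes_inverses(1)[OF p'] .
  have inj: "\<And>a b'. \<pi>' a = \<pi>' b' \<Longrightarrow> a = b'" using permutes_inj[OF p'] by (meson injD)
  define Q where "Q = s ` {1..m+1} - {i}"
  have Qsub: "\<pi>' ` Q \<subseteq> {1..m-1}"
  proof
    fix y assume "y \<in> \<pi>' ` Q"
    then obtain l where lQ: "l \<in> Q" and y: "y = \<pi>' l" by blast
    then obtain r where r: "r \<in> {1..m+1}" "l = s r" and li: "l \<noteq> i" unfolding Q_def by blast
    have ln: "l \<in> {1..n}" using r mn' permutes_in_image[OF s, of r] by simp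
    have isl: "inv s l = r" using r permutes_inverses(2)[OF s] by simp
    have "bb' l = c r" unfolding bb'_def using li isl by simp
    moreover have "c (m+1) \<le> c r" using cmono[of r "m+1"] r mn' by simp
    ultimately have gt: "bb' x < bb' l" using lt by simp
    have "\<pi>' l < \<pi>' x"
    proof (rule ccontr)
      assume "\<not> \<pi>' l < \<pi>' x"
      then have "\<pi>' x < \<pi>' l \<or> \<pi>' x = \<pi>' l" by auto
      then show False
      proof
        assume "\<pi>' x < \<pi>' l"
        then have "bb' l \<le> bb' x" using rk' xn ln by blast
        then show False using gt by simp
      next
        assume "\<pi>' x = \<pi>' l"
        then have "x = l" using inj by blast
        then show False using gt by simp
      qed
    qed
    moreover have "\<pi>' l \<noteq> m" using inj[of l i] li by (auto simp: m_def)
    moreover have "1 \<le> \<pi>' l" using permutes_in_image[OF p', of l] ln by simp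
    ultimately show "y \<in> {1..m-1}" using px y by simp
  qed
  have "card Q \<le> card {1..m-1}"
    by (rule card_inj_on_le[OF inj_on_subset[OF permutes_inj_on[OF p'] subset_UNIV] Qsub]) simp
  then have c1: "card Q \<le> m - 1" by simp
  have "card (s ` {1..m+1}) = m + 1"
    by (subst card_image) (auto intro: inj_on_subset[OF permutes_inj_on[OF s]])
  moreover have "card (s ` {1..m+1}) - card {i} \<le> card Q"
    unfolding Q_def by (rule diff_card_le_card_Diff) simp
  ultimately have "m \<le> card Q" by simp
  then show False using c1 m1 by simp
qed



lemma sufficiency:
  fixes v :: "nat \<Rightarrow> real"
  assumes a: "in_Rn_gt n k \<alpha>" and b: "in_Rn_gt n k \<beta>"
    and H: "\<forall>v s. type_profile n v \<longrightarrow> s permutes {1..n} \<longrightarrow>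
       (\<forall>j. 1 \<le> j \<and> j < n \<longrightarrow> v (s (j + 1)) \<le> v (s j)) \<longrightarrow>
       (\<forall>j. 1 \<le> j \<and> j < k \<longrightarrow>
          p_seq n k \<beta> (v \<circ> s) (j + 1) / \<alpha> (j + 1) \<le> p_seq n k \<beta> (v \<circ> s) j / \<alpha> j)"
    and tp: "type_profile n v"
  shows "\<exists>bb \<pi> pay. vcg_outcome n \<beta> v \<pi> pay \<and> gsp_nash n k \<alpha> \<beta> v bb \<pi> \<and>
        (\<forall>i\<in>{1..n}. gsp_payment n k \<alpha> bb \<pi> i = pay i)"
proof -
  have nn: "\<forall>l\<in>{1..n}. 0 \<le> v l" using tp by (simp add: type_profile_def)
  have k: "k \<le> n" using kn[OF b] .
  have k1: "1 \<le> k" using b by (simp add: in_Rn_gt_def)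
  obtain s where s: "s permutes {1..n}" and dec: "\<forall>j. 1 \<le> j \<and> j < n \<longrightarrow> v (s (j + 1)) \<le> v (s j)"
    using sort_perm_exists[of n v] by blast
  have si: "inv s permutes {1..n}" using permutes_inv[OF s] .
  define w where "w = v \<circ> s"
  define P where "P m = p_seq n k \<beta> w m" for m
  have hdec: "\<And>j. 1 \<le> j \<Longrightarrow> j < k \<Longrightarrow> P (j+1) / \<alpha> (j+1) \<le> P j / \<alpha> j"
    using H tp s dec unfolding P_def w_def by blast
  have wdec: "\<forall>j. 1 \<le> j \<and> j < n \<longrightarrow> w (j + 1) \<le> w j" using dec by (simp add: w_def)
  have wnn: "\<forall>r\<in>{1..n}. 0 \<le> w r" using nn permutes_in_image[OF s] by (simp add: w_def)
  have Pnn: "0 \<le> P m" if "1 \<le> m" for m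
    unfolding P_def p_seq_def
  proof (rule sum_nonneg)
    fix t assume t: "t \<in> {m..k}"
    have "0 \<le> (if t + 1 \<le> n then w (t+1) else 0)" using wnn by simp
    moreover have "0 < \<beta> t - \<beta> (t+1)" using d_pos[OF b] t that by simp
    ultimately show "0 \<le> (if t + 1 \<le> n then w (t+1) else 0) * (\<beta> t - \<beta> (t+1))" by simp
  qed
  have Pz: "P m = 0" if "k < m" for m unfolding P_def p_seq_def using that by simp
  have Pn: "P n = 0" if "k = n" unfolding P_def p_seq_def using that by simp
  define c where "c r = (if r = 1 then P 1 / \<alpha> 1 else if r \<le> k + 1 then P (r - 1) / \<alpha> (r - 1) else 0)" for r
  have cnn: "0 \<le> c r" if r1: "1 \<le> r" for r
  proof -
    have "0 \<le> P (r-1) / \<alpha> (r-1)" if "2 \<le> r" "r \<le> k + 1"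
    proof -
      have "1 \<le> r - 1" "r - 1 \<le> k" using that by auto
      then show ?thesis using Pnn[of "r-1"] alpha_pos[OF a, of "r-1"] by (simp add: less_imp_le)
    qed
    moreover have "0 \<le> P 1 / \<alpha> 1" using Pnn[of 1] alpha_pos[OF a, of 1] k1 by simp
    ultimately show ?thesis unfolding c_def using r1 by auto
  qed
  have cP: "c (m+1) = P m / \<alpha> m" if "1 \<le> m" "m \<le> k" for m
    unfolding c_def using that by simp
  have cdec: "\<forall>r. 1 \<le> r \<and> r < n \<longrightarrow> c (r + 1) \<le> c r"
  proof (intro allI impI)
    fix r assume r: "1 \<le> r \<and> r < n"
    show "c (r + 1) \<le> c r"
    proof (cases "r = 1")
      case True then show ?thesis unfolding c_def using k1 by simp
    next
      case False
      show ?thesis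
      proof (cases "r \<le> k")
        case True
        have r1: "1 \<le> r - 1" "r - 1 < k" using True False r by auto
        have "P (r - 1 + 1) / \<alpha> (r - 1 + 1) \<le> P (r-1) / \<alpha> (r-1)" using hdec[OF r1] .
        then show ?thesis unfolding c_def using True False r by simp
      next
        case False
        then have "c (r+1) = 0" unfolding c_def by simp
        then show ?thesis using cnn[of r] r by simp
      qed
    qed
  qed
  have cmono: "c b' \<le> c a'" if "1 \<le> a'" "a' \<le> b'" "b' \<le> n" for a' b'
    using dec_mono[OF cdec that] .
  define bb where "bb = (\<lambda>l. c (inv s l))"
  have isn: "inv s l \<in> {1..n}" if "l \<in> {1..n}" for l using permutes_in_image[OF si, of l] that by simp
  have bnn: "\<forall>i\<in>{1..n}. 0 \<le> bb i" using cnn isn by (simp add: bb_def)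
  have rk0: "gsp_ranking n bb (inv s)"
    unfolding gsp_ranking_def
  proof (intro conjI ballI impI)
    show "inv s \<in> assignments n" using si by (simp add: assignments_def)
    fix i l assume "i \<in> {1..n}" "l \<in> {1..n}" "inv s i < inv s l"
    then show "bb l \<le> bb i" unfolding bb_def using cmono isn by (meson atLeastAtMost_iff less_imp_le)
  qed
  have nth0: "nth_highest n bb m = c m" if "m \<in> {1..n}" for m
    using nth_highest_ranking[OF rk0 that] permutes_inv_inv[OF s] permutes_inverses(2)[OF s]
    by (simp add: bb_def)
  have pa: "inv s \<in> assignments n" using si by (simp add: assignments_def)
  have mx: "\<forall>\<pi>'\<in>assignments n. welfare n \<beta> v \<pi>' \<le> welfare n \<beta> v (inv s)"
  proof -
    have "welfare n \<beta> v (inv s) = (\<Sum>t=1..k. (\<beta> t - \<beta> (t+1)) * sum (v \<circ> s) {1..t})"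
      unfolding welfare_abel[OF b si] using S_sorted(2)[OF s] k by (intro sum.cong) auto
    then show ?thesis using max_welfare_sorted(2)[OF b nn s dec] by simp
  qed
  define pay where "pay i = clarke_payment n \<beta> v (inv s) i" for i
  have payP: "pay i = P (inv s i)" if i: "i \<in> {1..n}" for i
  proof (cases "inv s i \<le> k")
    case True
    then show ?thesis unfolding pay_def P_def w_def
      using clarke_pos[OF b nn s dec pa mx i refl] by simp
  next
    case False
    then show ?thesis unfolding pay_def using clarke_zero[OF b nn pa mx i] Pz by simp
  qed
  have gspP: "gsp_payment n k \<alpha> bb (inv s) i = P (inv s i)" if i: "i \<in> {1..n}" for i
  proof -
    define j where "j = inv s i"
    have jn: "j \<in> {1..n}" using isn[OF i] by (simp add: j_def)
    show ?thesis
    proof (cases "j \<le> k")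
      case True
      show ?thesis
      proof (cases "j + 1 \<le> n")
        case True
        then have "nth_highest n bb (j+1) = P j / \<alpha> j" using nth0[of "j+1"] cP[of j] jn \<open>j \<le> k\<close> by simp
        moreover have "0 < \<alpha> j" using alpha_pos[OF a] jn \<open>j \<le> k\<close> by simp
        ultimately show ?thesis unfolding gsp_payment_def using \<open>j \<le> k\<close> by (simp add: j_def[symmetric])
      next
        case False
        then have "j = n" "k = n" using jn \<open>j \<le> k\<close> k by auto
        then show ?thesis unfolding gsp_payment_def nth_highest_def using Pn by (simp add: j_def[symmetric])
      qed
    next
      case False
      then show ?thesis unfolding gsp_payment_def using Pz by (simp add: j_def[symmetric])
    qed
  qed
  have vo: "vcg_outcome n \<beta> v (inv s) pay"
    unfolding vcg_outcome_def using pa mx by (simp add: pay_def)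
  have ne: "gsp_nash n k \<alpha> \<beta> v bb (inv s)"
    unfolding gsp_nash_def
  proof (intro conjI ballI allI impI)
    show "0 \<le> bb i" if "i \<in> {1..n}" for i using bnn that by blast
    show "gsp_ranking n bb (inv s)" using rk0 .
    fix i c' \<pi>' assume i: "i \<in> {1..n}" and c': "0 \<le> c'" and rk: "gsp_ranking n (bb(i := c')) \<pi>'"
    have p': "\<pi>' permutes {1..n}" using rk by (simp add: gsp_ranking_def assignments_def)
    define m where "m = \<pi>' i"
    define j where "j = inv s i"
    have mn: "m \<in> {1..n}" using permutes_in_image[OF p', of i] i by (simp add: m_def)
    have jn: "j \<in> {1..n}" using isn[OF i] by (simp add: j_def)
    have vi: "v i = w j" unfolding w_def j_def using permutes_inverses(1)[OF s] by simp
    have orig: "gsp_utility n k \<alpha> \<beta> v bb (inv s) i = \<beta> j * w j - P j"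
      unfolding gsp_utility_def using gspP[OF i] vi by (simp add: j_def)
    have claim: "P m \<le> gsp_payment n k \<alpha> (bb(i := c')) \<pi>' i"
    proof (cases "m \<le> k")
      case False
      then show ?thesis unfolding gsp_payment_def using Pz by (simp add: m_def[symmetric])
    next
      case True
      show ?thesis
      proof (cases "m + 1 \<le> n")
        case False
        then have "m = n" "k = n" using mn True k by auto
        then show ?thesis unfolding gsp_payment_def nth_highest_def using Pn by (simp add: m_def[symmetric])
      next
        case mn1: True
        have "c (m + 1) \<le> (bb(i := c')) (inv \<pi>' (m + 1))"
          using deviation_bid[OF cmono s i rk[unfolded bb_def]] mn1 by (simp add: m_def bb_def)
        moreover have "nth_highest n (bb(i := c')) (m + 1) = (bb(i := c')) (inv \<pi>' (m + 1))"
          using nth_highest_ranking[OF rk] mn1 by simp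
        moreover have "0 < \<alpha> m" using alpha_pos[OF a] mn True by simp
        moreover have "c (m + 1) = P m / \<alpha> m" using cP mn True by simp
        ultimately have "P m \<le> \<alpha> m * nth_highest n (bb(i := c')) (m + 1)"
          by (simp add: divide_le_eq mult.commute)
        then show ?thesis unfolding gsp_payment_def using True by (simp add: m_def[symmetric])
      qed
    qed
    have "gsp_utility n k \<alpha> \<beta> v (bb(i := c')) \<pi>' i \<le> \<beta> m * w j - P m"
      unfolding gsp_utility_def using claim vi by (simp add: m_def[symmetric])
    also have "\<dots> \<le> \<beta> j * w j - P j"
      using envy_free[OF b wdec wnn mn jn] by (simp add: P_def)
    finally show "gsp_utility n k \<alpha> \<beta> v (bb(i := c')) \<pi>' i \<le> gsp_utility n k \<alpha> \<beta> v bb (inv s) i"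
      using orig by simp
  qed
  have "\<forall>i\<in>{1..n}. gsp_payment n k \<alpha> bb (inv s) i = pay i" using gspP payP by simp
  then show ?thesis using vo ne by blast
qed

theorem proposition3:
  fixes n k :: nat and \<alpha> \<beta> :: "nat \<Rightarrow> real"
  assumes "in_Rn_gt n k \<alpha>" and "in_Rn_gt n k \<beta>"
  shows "vickrey_preserving_gsp n k \<alpha> \<beta> \<longleftrightarrow>
    (\<forall>v s. type_profile n v \<longrightarrow> s permutes {1..n} \<longrightarrow>
       (\<forall>j. 1 \<le> j \<and> j < n \<longrightarrow> v (s (j + 1)) \<le> v (s j)) \<longrightarrow>
       (\<forall>j. 1 \<le> j \<and> j < k \<longrightarrow>
          p_seq n k \<beta> (v \<circ> s) (j + 1) / \<alpha> (j + 1) \<le> p_seq n k \<beta> (v \<circ> s) j / \<alpha> j))"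
proof
  assume vp: "vickrey_preserving_gsp n k \<alpha> \<beta>"
  show "\<forall>v s. type_profile n v \<longrightarrow> s permutes {1..n} \<longrightarrow>
       (\<forall>j. 1 \<le> j \<and> j < n \<longrightarrow> v (s (j + 1)) \<le> v (s j)) \<longrightarrow>
       (\<forall>j. 1 \<le> j \<and> j < k \<longrightarrow>
          p_seq n k \<beta> (v \<circ> s) (j + 1) / \<alpha> (j + 1) \<le> p_seq n k \<beta> (v \<circ> s) j / \<alpha> j)"
    using necessity[OF assms vp] by blast
next
  assume H: "\<forall>v s. type_profile n v \<longrightarrow> s permutes {1..n} \<longrightarrow>
       (\<forall>j. 1 \<le> j \<and> j < n \<longrightarrow> v (s (j + 1)) \<le> v (s j)) \<longrightarrow>
       (\<forall>j. 1 \<le> j \<and> j < k \<longrightarrow>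
          p_seq n k \<beta> (v \<circ> s) (j + 1) / \<alpha> (j + 1) \<le> p_seq n k \<beta> (v \<circ> s) j / \<alpha> j)"
  show "vickrey_preserving_gsp n k \<alpha> \<beta>"
    unfolding vickrey_preserving_gsp_def using sufficiency[OF assms H] by blast
qed

end
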